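(* For every algebra $A$ (not necessarily unital or commutative) we have $\mathfrak{P}^{\mathrm{nc}}(A)=0$.
   Context: Fix a field $\mathbb{F}$; algebras are associative $\mathbb{F}$-algebras, not necessarily unital or commutative. For an algebra $A$, $\mathfrak{P}^{\mathrm{nc}}(A)$ is the set of $a\in A$ such that for every algebra $C$ and every algebra morphism $\varphi:A\to C[x]$, $\varphi(a)$ is a constant polynomial (lies in $C\subseteq C[x]$). (The paper defines it via a universal pro-algebra $\mathfrak{M}^{\mathrm{nc}}_{A,\mathbb{F}[x]}$ and proves it equals this set.) *)

theory Defs
  imports Main
begin

record ('f, 'a) nc_alg =
  carrier :: "'a set"
  add :: "'a \<Rightarrow> 'a \<Rightarrow> 'a"
  mul :: "'a \<Rightarrow> 'a \<Rightarrow> 'a"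
  zero :: "'a"
  smul :: "'f \<Rightarrow> 'a \<Rightarrow> 'a"

definition is_alg :: "('f::field, 'a) nc_alg \<Rightarrow> bool" where
  "is_alg A \<longleftrightarrow>
     zero A \<in> carrier A \<and>
     (\<forall>x\<in>carrier A. \<forall>y\<in>carrier A. add A x y \<in> carrier A) \<and>
     (\<forall>x\<in>carrier A. \<forall>y\<in>carrier A. mul A x y \<in> carrier A) \<and>
     (\<forall>c. \<forall>x\<in>carrier A. smul A c x \<in> carrier A) \<and>
     (\<forall>x\<in>carrier A. \<forall>y\<in>carrier A. \<forall>z\<in>carrier A. add A (add A x y) z = add A x (add A y z)) \<and>
     (\<forall>x\<in>carrier A. \<forall>y\<in>carrier A. add A x y = add A y x) \<and>
     (\<forall>x\<in>carrier A. add A (zero A) x = x) \<and>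
     (\<forall>x\<in>carrier A. \<exists>y\<in>carrier A. add A x y = zero A) \<and>
     (\<forall>x\<in>carrier A. \<forall>y\<in>carrier A. \<forall>z\<in>carrier A. mul A (mul A x y) z = mul A x (mul A y z)) \<and>
     (\<forall>x\<in>carrier A. \<forall>y\<in>carrier A. \<forall>z\<in>carrier A. mul A x (add A y z) = add A (mul A x y) (mul A x z)) \<and>
     (\<forall>x\<in>carrier A. \<forall>y\<in>carrier A. \<forall>z\<in>carrier A. mul A (add A x y) z = add A (mul A x z) (mul A y z)) \<and>
     (\<forall>c. \<forall>x\<in>carrier A. \<forall>y\<in>carrier A. smul A c (add A x y) = add A (smul A c x) (smul A c y)) \<and>
     (\<forall>c d. \<forall>x\<in>carrier A. smul A (c + d) x = add A (smul A c x) (smul A d x)) \<and>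
     (\<forall>c d. \<forall>x\<in>carrier A. smul A (c * d) x = smul A c (smul A d x)) \<and>
     (\<forall>x\<in>carrier A. smul A 1 x = x) \<and>
     (\<forall>c. \<forall>x\<in>carrier A. \<forall>y\<in>carrier A. smul A c (mul A x y) = mul A (smul A c x) y) \<and>
     (\<forall>c. \<forall>x\<in>carrier A. \<forall>y\<in>carrier A. smul A c (mul A x y) = mul A x (smul A c y))"

primrec alg_sum :: "('f, 'a) nc_alg \<Rightarrow> (nat \<Rightarrow> 'a) \<Rightarrow> nat \<Rightarrow> 'a" where
  "alg_sum C f 0 = zero C"
| "alg_sum C f (Suc n) = add C (alg_sum C f n) (f n)"

definition poly_alg :: "('f, 'c) nc_alg \<Rightarrow> ('f, nat \<Rightarrow> 'c) nc_alg" where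
  "poly_alg C =
     \<lparr> carrier = {p. (\<forall>n. p n \<in> carrier C) \<and> finite {n. p n \<noteq> zero C}},
       add = (\<lambda>p q n. add C (p n) (q n)),
       mul = (\<lambda>p q n. alg_sum C (\<lambda>i. mul C (p i) (q (n - i))) (Suc n)),
       zero = (\<lambda>n. zero C),
       smul = (\<lambda>c p n. smul C c (p n)) \<rparr>"

definition alg_hom :: "('f, 'a) nc_alg \<Rightarrow> ('f, 'b) nc_alg \<Rightarrow> ('a \<Rightarrow> 'b) \<Rightarrow> bool" where
  "alg_hom A B \<phi> \<longleftrightarrow>
     (\<forall>x\<in>carrier A. \<phi> x \<in> carrier B) \<and>
     (\<forall>x\<in>carrier A. \<forall>y\<in>carrier A. \<phi> (add A x y) = add B (\<phi> x) (\<phi> y)) \<and>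
     (\<forall>x\<in>carrier A. \<forall>y\<in>carrier A. \<phi> (mul A x y) = mul B (\<phi> x) (\<phi> y)) \<and>
     (\<forall>c. \<forall>x\<in>carrier A. \<phi> (smul A c x) = smul B c (\<phi> x))"

text \<open>C ranges over all algebras whose carrier lives in the type 'a + 'f + nat; this type is
  large enough (cardinality \<ge> |A| + |F| + aleph_0) that every algebra C relevant for a
  morphism from A can be replaced by an isomorphic copy of a subalgebra living there.\<close>
definition Pnc :: "('f::field, 'a) nc_alg \<Rightarrow> 'a set" where
  "Pnc A = {a \<in> carrier A.
     \<forall>(C :: ('f, 'a + 'f + nat) nc_alg) \<phi>.
        is_alg C \<and> alg_hom A (poly_alg C) \<phi> \<longrightarrow> (\<forall>n\<ge>1. \<phi> a n = zero C)}"

end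

theory Submission
  imports Defs
begin

context fixes A :: "('f::field, 'a) nc_alg" assumes A: "is_alg A" begin
lemma ax:
  shows zc: "zero A \<in> carrier A"
  and addc: "\<And>x y. x\<in>carrier A \<Longrightarrow> y\<in>carrier A \<Longrightarrow> add A x y \<in> carrier A"
  and mulc: "\<And>x y. x\<in>carrier A \<Longrightarrow> y\<in>carrier A \<Longrightarrow> mul A x y \<in> carrier A"
  and smulc: "\<And>c x. x\<in>carrier A \<Longrightarrow> smul A c x \<in> carrier A"
  and add_assoc: "\<And>x y z. x\<in>carrier A \<Longrightarrow> y\<in>carrier A \<Longrightarrow> z\<in>carrier A \<Longrightarrow> add A (add A x y) z = add A x (add A y z)"
  and add_comm: "\<And>x y. x\<in>carrier A \<Longrightarrow> y\<in>carrier A \<Longrightarrow> add A x y = add A y x"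
  and addz: "\<And>x. x\<in>carrier A \<Longrightarrow> add A (zero A) x = x"
  and neg: "\<And>x. x\<in>carrier A \<Longrightarrow> \<exists>y\<in>carrier A. add A x y = zero A"
  and mul_assoc: "\<And>x y z. x\<in>carrier A \<Longrightarrow> y\<in>carrier A \<Longrightarrow> z\<in>carrier A \<Longrightarrow> mul A (mul A x y) z = mul A x (mul A y z)"
  and distl: "\<And>x y z. x\<in>carrier A \<Longrightarrow> y\<in>carrier A \<Longrightarrow> z\<in>carrier A \<Longrightarrow> mul A x (add A y z) = add A (mul A x y) (mul A x z)"
  and distr: "\<And>x y z. x\<in>carrier A \<Longrightarrow> y\<in>carrier A \<Longrightarrow> z\<in>carrier A \<Longrightarrow> mul A (add A x y) z = add A (mul A x z) (mul A y z)"
  and sdist: "\<And>c x y. x\<in>carrier A \<Longrightarrow> y\<in>carrier A \<Longrightarrow> smul A c (add A x y) = add A (smul A c x) (smul A c y)"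
  and sdist2: "\<And>c d x. x\<in>carrier A \<Longrightarrow> smul A (c + d) x = add A (smul A c x) (smul A d x)"
  and smul_assoc: "\<And>c d x. x\<in>carrier A \<Longrightarrow> smul A (c * d) x = smul A c (smul A d x)"
  and smul1: "\<And>x. x\<in>carrier A \<Longrightarrow> smul A 1 x = x"
  and smull: "\<And>c x y. x\<in>carrier A \<Longrightarrow> y\<in>carrier A \<Longrightarrow> smul A c (mul A x y) = mul A (smul A c x) y"
  and smulr: "\<And>c x y. x\<in>carrier A \<Longrightarrow> y\<in>carrier A \<Longrightarrow> smul A c (mul A x y) = mul A x (smul A c y)"
  using A unfolding is_alg_def by (simp_all add: A[unfolded is_alg_def])

lemma addzr: "x \<in> carrier A \<Longrightarrow> add A x (zero A) = x"
  using add_comm addz zc by metis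

lemma idem_zero:
  assumes x: "x \<in> carrier A" and h: "add A x x = x"
  shows "x = zero A"
proof -
  obtain y where y: "y \<in> carrier A" "add A x y = zero A"
    using neg x by blast
  have "add A (add A x x) y = add A x (add A x y)"
    using add_assoc x y by blast
  then show ?thesis using h y addzr x by simp
qed

lemma mulz: "x \<in> carrier A \<Longrightarrow> mul A (zero A) x = zero A"
proof -
  assume x: "x \<in> carrier A"
  have c: "mul A (zero A) x \<in> carrier A" using mulc x zc by blast
  have "mul A (add A (zero A) (zero A)) x = add A (mul A (zero A) x) (mul A (zero A) x)"
    using distr x zc by blast
  then show ?thesis using idem_zero[OF c] addz[OF zc] by simp
qed

lemma mulzr: "x \<in> carrier A \<Longrightarrow> mul A x (zero A) = zero A"
proof -
  assume x: "x \<in> carrier A"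
  have c: "mul A x (zero A) \<in> carrier A" using mulc x zc by blast
  have "mul A x (add A (zero A) (zero A)) = add A (mul A x (zero A)) (mul A x (zero A))"
    using distl x zc by blast
  then show ?thesis using idem_zero[OF c] addz[OF zc] by simp
qed

lemma smulz: "smul A c (zero A) = zero A"
proof -
  have c: "smul A c (zero A) \<in> carrier A" using smulc zc by blast
  have "smul A c (add A (zero A) (zero A)) = add A (smul A c (zero A)) (smul A c (zero A))"
    using sdist zc by blast
  then show ?thesis using idem_zero[OF c] addz[OF zc] by simp
qed

lemma sum_zero: "(\<And>i. i < m \<Longrightarrow> f i = zero A) \<Longrightarrow> alg_sum A f m = zero A"
  by (induction m) (auto simp: addz zc)

lemma sum_carrier: "(\<And>i. i < m \<Longrightarrow> f i \<in> carrier A) \<Longrightarrow> alg_sum A f m \<in> carrier A"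
  by (induction m) (auto simp: addc zc)

lemma sum_hom:
  assumes h: "alg_hom A C e" and ez: "e (zero A) = zero C"
  shows "(\<And>i. i < m \<Longrightarrow> f i \<in> carrier A) \<Longrightarrow> e (alg_sum A f m) = alg_sum C (\<lambda>i. e (f i)) m"
proof (induction m)
  case 0 then show ?case using ez by simp
next
  case (Suc m)
  have "e (alg_sum A f (Suc m)) = add C (e (alg_sum A f m)) (e (f m))"
    using h Suc.prems sum_carrier[of m f] unfolding alg_hom_def by simp
  then show ?case using Suc by simp
qed

end

lemma zero_in_Pnc: fixes A :: "('f::field, 'a) nc_alg" assumes "is_alg A" shows "zero A \<in> Pnc A"
  unfolding Pnc_def
proof (intro CollectI conjI zc[OF assms] allI impI)
  fix C :: "('f, 'a + 'f + nat) nc_alg" and \<phi> n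
  assume H: "is_alg C \<and> alg_hom A (poly_alg C) \<phi>"
  then have "\<phi> (add A (zero A) (zero A)) = add (poly_alg C) (\<phi> (zero A)) (\<phi> (zero A))"
    "\<phi> (zero A) \<in> carrier (poly_alg C)"
    using zc[OF assms] unfolding alg_hom_def by blast+
  then have "add C (\<phi> (zero A) n) (\<phi> (zero A) n) = \<phi> (zero A) n" "\<phi> (zero A) n \<in> carrier C"
    using addz[OF assms zc[OF assms]] by (auto simp: poly_alg_def fun_eq_iff)
  then show "\<phi> (zero A) n = zero C"
    using H idem_zero[of C] by metis
qed


lemma inj_ex:
  fixes S :: "'a set"
  shows "\<exists>e :: ('a \<times> 'a) \<Rightarrow> ('a + 'f + nat). inj_on e (S \<times> S)"
proof (cases "finite S")
  case True
  then have "finite (S \<times> S)" by simp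
  then obtain f :: "'a \<times> 'a \<Rightarrow> nat" and n where "inj_on f (S \<times> S)"
    using finite_imp_inj_to_nat_seg by blast
  then have "inj_on (\<lambda>x. Inr (Inr (f x)) :: 'a + 'f + nat) (S \<times> S)"
    by (auto simp: inj_on_def)
  then show ?thesis by blast
next
  case False
  then obtain f where "bij_betw f (S \<times> S) S"
    using card_of_ordIso[THEN iffD2, OF card_of_Times_same_infinite] by blast
  then have "inj_on (\<lambda>x. Inl (f x) :: 'a + 'f + nat) (S \<times> S)"
    by (auto simp: inj_on_def bij_betw_def)
  then show ?thesis by blast
qed



definition transport_alg :: "('f, 'b) nc_alg \<Rightarrow> ('b \<Rightarrow> 'c) \<Rightarrow> ('f, 'c) nc_alg" where
  "transport_alg B e =
     \<lparr> carrier = e ` carrier B,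
       add = (\<lambda>x y. e (add B (inv_into (carrier B) e x) (inv_into (carrier B) e y))),
       mul = (\<lambda>x y. e (mul B (inv_into (carrier B) e x) (inv_into (carrier B) e y))),
       zero = e (zero B),
       smul = (\<lambda>c x. e (smul B c (inv_into (carrier B) e x))) \<rparr>"

lemma transport_alg_ok:
  fixes B :: "('f::field, 'b) nc_alg"
  assumes B: "is_alg B" and inj: "inj_on e (carrier B)"
  shows "is_alg (transport_alg B e)" "alg_hom B (transport_alg B e) e"
proof -
  have iv: "\<And>x. x \<in> carrier B \<Longrightarrow> inv_into (carrier B) e (e x) = x"
    using inj by (simp add: inv_into_f_f)
  note ax = zc[OF B] addc[OF B] mulc[OF B] smulc[OF B]
  show "alg_hom B (transport_alg B e) e"
    unfolding alg_hom_def transport_alg_def by (simp add: iv ax)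
  show "is_alg (transport_alg B e)"
    unfolding transport_alg_def is_alg_def
    apply (simp add: iv ax)
    apply (intro conjI ballI allI)
    apply (simp_all add: ax add_assoc[OF B] addz[OF B] mul_assoc[OF B]
        distl[OF B] distr[OF B] sdist[OF B] sdist2[OF B] smul_assoc[OF B] smul1[OF B])
    apply (metis add_comm[OF B])
    apply (metis neg[OF B])
    apply (metis smull[OF B])
    apply (metis smulr[OF B])
    done
qed

definition pairalg :: "('f, 'a) nc_alg \<Rightarrow> ('f, 'a \<times> 'a) nc_alg" where
  "pairalg A = \<lparr> carrier = carrier A \<times> carrier A,
     add = (\<lambda>x y. (add A (fst x) (fst y), add A (snd x) (snd y))),
     mul = (\<lambda>x y. (mul A (fst x) (fst y), mul A (fst x) (snd y))),
     zero = (zero A, zero A),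
     smul = (\<lambda>c x. (smul A c (fst x), smul A c (snd x))) \<rparr>"

lemma pairalg_alg:
  fixes A :: "('f::field, 'a) nc_alg"
  assumes A: "is_alg A"
  shows "is_alg (pairalg A)"
  unfolding is_alg_def pairalg_def
  apply (simp add: zc[OF A] addc[OF A] mulc[OF A] smulc[OF A])
  apply (intro conjI ballI allI)
  apply (auto simp add: zc[OF A] addc[OF A] mulc[OF A] smulc[OF A] add_assoc[OF A] addz[OF A] mul_assoc[OF A]
        distl[OF A] distr[OF A] sdist[OF A] sdist2[OF A] smul_assoc[OF A] smul1[OF A]
        smull[OF A] Bex_def)
  apply (simp add: add_comm[OF A])
  apply (simp add: add_comm[OF A])
  apply (meson neg[OF A])
  apply (meson neg[OF A])
  apply (metis smull[OF A] smulr[OF A])+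
  done



definition psi :: "('f, 'a) nc_alg \<Rightarrow> 'a \<Rightarrow> nat \<Rightarrow> 'a \<times> 'a" where
  "psi A a n = (if n = 0 then (a, zero A) else if n = 1 then (zero A, a) else (zero A, zero A))"

lemma psi_hom:
  fixes A :: "('f::field, 'a) nc_alg"
  assumes A: "is_alg A"
  shows "alg_hom A (poly_alg (pairalg A)) (psi A)"
  unfolding alg_hom_def
proof (intro conjI ballI allI)
  note ax = zc[OF A] addc[OF A] mulc[OF A] smulc[OF A]
  fix x assume x: "x \<in> carrier A"
  have "{n. psi A x n \<noteq> zero (pairalg A)} \<subseteq> {0, 1}"
    by (auto simp: psi_def pairalg_def)
  then show "psi A x \<in> carrier (poly_alg (pairalg A))"
    using x ax by (auto simp: poly_alg_def pairalg_def psi_def intro: finite_subset)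
next
  note ax = zc[OF A] addc[OF A] mulc[OF A] smulc[OF A]
  fix x y assume x: "x \<in> carrier A" and y: "y \<in> carrier A"
  show "psi A (add A x y) = add (poly_alg (pairalg A)) (psi A x) (psi A y)"
    using x y ax by (auto simp: poly_alg_def pairalg_def psi_def fun_eq_iff addz[OF A])
  show "psi A (mul A x y) = mul (poly_alg (pairalg A)) (psi A x) (psi A y)"
  proof
    fix n
    show "psi A (mul A x y) n = mul (poly_alg (pairalg A)) (psi A x) (psi A y) n"
    proof (cases "n \<le> 1")
      case True
      then have "n = 0 \<or> n = 1" by auto
      then show ?thesis
        using x y ax
        by (auto simp: poly_alg_def pairalg_def psi_def addz[OF A] addzr[OF A] mulz[OF A] mulzr[OF A]
            numeral_2_eq_2)
    next
      case False
      have "alg_sum (pairalg A) (\<lambda>i. mul (pairalg A) (psi A x i) (psi A y (n - i))) (Suc n)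
            = zero (pairalg A)"
      proof (rule sum_zero[OF pairalg_alg[OF A]])
        fix i assume "i < Suc n"
        show "mul (pairalg A) (psi A x i) (psi A y (n - i)) = zero (pairalg A)"
          using False x y ax
          by (cases "i = 0") (auto simp: pairalg_def psi_def mulz[OF A] mulzr[OF A])
      qed
      then show ?thesis using False by (simp add: poly_alg_def psi_def pairalg_def)
    qed
  qed
next
  note ax = zc[OF A] addc[OF A] mulc[OF A] smulc[OF A]
  fix c x assume x: "x \<in> carrier A"
  show "psi A (smul A c x) = smul (poly_alg (pairalg A)) c (psi A x)"
    by (auto simp: poly_alg_def pairalg_def psi_def fun_eq_iff smulz[OF A])
qed

lemma lift_hom:
  fixes P :: "('f::field, 'b) nc_alg"
  assumes P: "is_alg P" and h: "alg_hom A (poly_alg P) \<psi>" and e: "alg_hom P C e"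
    and ez: "e (zero P) = zero C"
  shows "alg_hom A (poly_alg C) (\<lambda>a n. e (\<psi> a n))"
  unfolding alg_hom_def
proof (intro conjI ballI allI)
  have pc: "\<And>x n. x \<in> carrier A \<Longrightarrow> \<psi> x n \<in> carrier P"
    using h unfolding alg_hom_def poly_alg_def by auto
  fix x assume x: "x \<in> carrier A"
  have "{n. e (\<psi> x n) \<noteq> zero C} \<subseteq> {n. \<psi> x n \<noteq> zero P}" using ez by auto
  moreover have "finite {n. \<psi> x n \<noteq> zero P}"
    using h x unfolding alg_hom_def poly_alg_def by auto
  ultimately show "(\<lambda>n. e (\<psi> x n)) \<in> carrier (poly_alg C)"
    using e pc[OF x] unfolding alg_hom_def poly_alg_def by (auto intro: finite_subset)
next
  have pc: "\<And>x n. x \<in> carrier A \<Longrightarrow> \<psi> x n \<in> carrier P"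
    using h unfolding alg_hom_def poly_alg_def by auto
  fix x y assume x: "x \<in> carrier A" and y: "y \<in> carrier A"
  show "(\<lambda>n. e (\<psi> (add A x y) n)) = add (poly_alg C) (\<lambda>n. e (\<psi> x n)) (\<lambda>n. e (\<psi> y n))"
    using h e x y pc unfolding alg_hom_def by (simp add: poly_alg_def)
  have pm: "\<psi> (mul A x y) = mul (poly_alg P) (\<psi> x) (\<psi> y)"
    using h x y unfolding alg_hom_def by blast
  show "(\<lambda>n. e (\<psi> (mul A x y) n)) = mul (poly_alg C) (\<lambda>n. e (\<psi> x n)) (\<lambda>n. e (\<psi> y n))"
  proof
    fix n
    have "e (\<psi> (mul A x y) n) = e (alg_sum P (\<lambda>i. mul P (\<psi> x i) (\<psi> y (n - i))) (Suc n))"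
      by (simp add: pm poly_alg_def)
    also have "\<dots> = alg_sum C (\<lambda>i. e (mul P (\<psi> x i) (\<psi> y (n - i)))) (Suc n)"
      by (rule sum_hom[OF P e ez]) (simp add: mulc[OF P] pc x y)
    also have "\<dots> = alg_sum C (\<lambda>i. mul C (e (\<psi> x i)) (e (\<psi> y (n - i)))) (Suc n)"
      using e pc x y unfolding alg_hom_def by simp
    finally show "e (\<psi> (mul A x y) n) = mul (poly_alg C) (\<lambda>n. e (\<psi> x n)) (\<lambda>n. e (\<psi> y n)) n"
      by (simp add: poly_alg_def)
  qed
next
  have pc: "\<And>x n. x \<in> carrier A \<Longrightarrow> \<psi> x n \<in> carrier P"
    using h unfolding alg_hom_def poly_alg_def by auto
  fix c x assume x: "x \<in> carrier A"
  show "(\<lambda>n. e (\<psi> (smul A c x) n)) = smul (poly_alg C) c (\<lambda>n. e (\<psi> x n))"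
    using h e x pc unfolding alg_hom_def by (simp add: poly_alg_def)
qed

theorem mainTheorem9:
  fixes A :: "('f::field, 'a) nc_alg"
  assumes "is_alg A"
  shows "Pnc A = {zero A}"
proof
  show "{zero A} \<subseteq> Pnc A" using zero_in_Pnc[OF assms] by simp
next
  show "Pnc A \<subseteq> {zero A}"
  proof
    fix a assume a: "a \<in> Pnc A"
    then have aA: "a \<in> carrier A" by (simp add: Pnc_def)
    obtain e :: "'a \<times> 'a \<Rightarrow> 'a + 'f + nat" where inj: "inj_on e (carrier A \<times> carrier A)"
      using inj_ex by blast
    define P where "P = pairalg A"
    have P: "is_alg P" using pairalg_alg[OF assms] by (simp add: P_def)
    have injP: "inj_on e (carrier P)" using inj by (simp add: P_def pairalg_def)
    define C where "C = transport_alg P e"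
    have C: "is_alg C" and eh: "alg_hom P C e"
      using transport_alg_ok[OF P injP] by (simp_all add: C_def)
    have ez: "e (zero P) = zero C" by (simp add: C_def transport_alg_def)
    have hom: "alg_hom A (poly_alg C) (\<lambda>x n. e (psi A x n))"
      using lift_hom[OF P _ eh ez] psi_hom[OF assms] by (simp add: P_def)
    have "e (psi A a 1) = zero C"
      using a C hom unfolding Pnc_def by blast
    then have "e (zero A, a) = e (zero A, zero A)"
      using ez by (simp add: psi_def P_def pairalg_def)
    then have "a = zero A"
      using inj aA zc[OF assms] by (auto dest: inj_onD)
    then show "a \<in> {zero A}" by simp
  qed
qed

end
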